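(* Let $p_1$ and $p_2$ be probability densities on $\mathbb{R}^n$ and $\omega\in[0,1]$, and let $\mathbf{M}^h_\omega(p_1,p_2)=\frac{1}{\zeta^h}\frac{p_1p_2}{(1-\omega)p_1+\omega p_2}$ be the normalized harmonic mean density, where $\zeta^h=\int_{\mathbb{R}^n}\frac{p_1(\mathbf{x})p_2(\mathbf{x})}{(1-\omega)p_1(\mathbf{x})+\omega p_2(\mathbf{x})}d\mathbf{x}$ (assumed positive). Then \[ \mathbb{D}\big(p_1:\mathbf{M}^h_\omega(p_1,p_2)\big)\le \mathbb{D}(p_1:p_2)\quad\text{and}\quad \mathbb{D}\big(p_2:\mathbf{M}^h_\omega(p_1,p_2)\big)\le \mathbb{D}(p_2:p_1). \]
   Context: $\mathbb{D}(p:q)=\int p(\mathbf{x})\ln\frac{p(\mathbf{x})}{q(\mathbf{x})}d\mathbf{x}\in[0,\infty]$ denotes the (forward) Kullback–Leibler divergence from $p$ to $q$; in general $\mathbb{D}(p:q)\neq\mathbb{D}(q:p)$. The quotient in the harmonic mean is taken to be $0$ where its numerator vanishes. *)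

theory Defs
  imports "HOL-Analysis.Analysis"
begin

definition is_density :: "('a::euclidean_space \<Rightarrow> real) \<Rightarrow> bool" where
  "is_density p \<longleftrightarrow> p \<in> borel_measurable borel \<and> (\<forall>x. 0 \<le> p x)
      \<and> (\<integral>\<^sup>+ x. ennreal (p x) \<partial>lborel) = 1"

definition kl_integrand :: "('a \<Rightarrow> real) \<Rightarrow> ('a \<Rightarrow> real) \<Rightarrow> 'a \<Rightarrow> ereal" where
  "kl_integrand p q x =
     (if p x = 0 then 0 else if q x = 0 then \<infinity> else ereal (p x * ln (p x / q x)))"

definition KL_div :: "('a::euclidean_space \<Rightarrow> real) \<Rightarrow> ('a \<Rightarrow> real) \<Rightarrow> ereal" where
  "KL_div p q =
     enn2ereal (\<integral>\<^sup>+ x. e2ennreal (kl_integrand p q x) \<partial>lborel)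
   - enn2ereal (\<integral>\<^sup>+ x. e2ennreal (- kl_integrand p q x) \<partial>lborel)"

definition harm :: "real \<Rightarrow> ('a \<Rightarrow> real) \<Rightarrow> ('a \<Rightarrow> real) \<Rightarrow> 'a \<Rightarrow> real" where
  "harm w p1 p2 x =
     (if p1 x * p2 x = 0 then 0 else p1 x * p2 x / ((1 - w) * p1 x + w * p2 x))"

definition harm_norm_const :: "real \<Rightarrow> ('a::euclidean_space \<Rightarrow> real) \<Rightarrow> ('a \<Rightarrow> real) \<Rightarrow> real" where
  "harm_norm_const w p1 p2 = (\<integral> x. harm w p1 p2 x \<partial>lborel)"

definition harm_mean_density :: "real \<Rightarrow> ('a::euclidean_space \<Rightarrow> real) \<Rightarrow> ('a \<Rightarrow> real) \<Rightarrow> 'a \<Rightarrow> real" where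
  "harm_mean_density w p1 p2 x = harm w p1 p2 x / harm_norm_const w p1 p2"

end

theory Submission
  imports Defs
begin

lemma key_real:
  fixes a b w z :: real
  assumes a: "a > 0" and b: "b > 0" and w: "0 \<le> w" "w \<le> 1" and z: "z > 0"
  shows "a * ln (a / ((a * b / ((1 - w) * a + w * b)) / z)) \<le> a * ln (a / b) + w * b - a * (1 - z + w)"
proof -
  define d where "d = (1 - w) * a + w * b"
  have d: "d > 0" unfolding d_def using a b w
    by (smt (verit) mult_nonneg_nonneg mult_pos_pos)
  have eq: "a / ((a * b / d) / z) = (a / b) * z * (d / a)"
    using a b d z by (simp add: field_simps)
  have l1: "ln ((a / b) * z * (d / a)) = ln ((a / b) * z) + ln (d / a)"
    using a b d z ln_mult[of "a/b*z" "d/a"] by auto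
  have l2: "ln ((a / b) * z) = ln (a / b) + ln z"
    using a b d z ln_mult[of "a/b" z] by auto
  have "ln (a / ((a * b / d) / z)) = ln (a / b) + ln z + ln (d / a)"
    unfolding eq l1 l2 ..
  moreover have "ln z \<le> z - 1" using z by (rule ln_le_minus_one)
  moreover have "ln (d / a) \<le> d / a - 1" using a d by (intro ln_le_minus_one) simp
  ultimately have "ln (a / ((a * b / d) / z)) \<le> ln (a / b) + (z - 1) + (d / a - 1)" by linarith
  hence "a * ln (a / ((a * b / d) / z)) \<le> a * (ln (a / b) + (z - 1) + (d / a - 1))"
    using a by (simp add: mult_left_mono)
  also have "\<dots> = a * ln (a / b) + w * b - a * (1 - z + w)"
    using a unfolding d_def by (simp add: field_simps)
  finally show ?thesis unfolding d_def .
qed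

lemma ennreal_parts:
  fixes f g c1 c2 :: real
  assumes "0 \<le> c1" "0 \<le> c2" "f + c2 \<le> g + c1"
  shows "ennreal f + ennreal (- g) + ennreal c2 \<le> ennreal g + ennreal (- f) + ennreal c1"
proof -
  have e: "ennreal x = ennreal (max x 0)" for x by (simp add: max_def ennreal_neg)
  have "ennreal f + ennreal (- g) + ennreal c2 = ennreal (max f 0 + max (-g) 0 + c2)"
    using assms by (subst (1 2) e) (simp add: ennreal_plus)
  also have "\<dots> \<le> ennreal (max g 0 + max (-f) 0 + c1)"
    using assms by (intro ennreal_leI) linarith
  also have "\<dots> = ennreal g + ennreal (- f) + ennreal c1"
    using assms by (simp add: ennreal_plus flip: e)
  finally show ?thesis .
qed

lemma ennreal_final:
  fixes a b c d :: ennreal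
  assumes "a + d \<le> c + b" "b < \<infinity>"
  shows "enn2ereal a - enn2ereal b \<le> enn2ereal c - enn2ereal d"
proof (cases "c = \<infinity>")
  case True
  then show ?thesis by simp
next
  case False
  then have cb: "c + b < \<infinity>" using assms by (simp add: less_top)
  have "a \<le> a + d" "d \<le> a + d" by simp_all
  then have "a < \<infinity>" "d < \<infinity>" using assms(1) cb
    by (meson order.trans order.strict_trans1)+
  from \<open>a < \<infinity>\<close> obtain ra where ra: "0 \<le> ra" "a = ennreal ra" by (cases a) auto
  from \<open>b < \<infinity>\<close> obtain rb where rb: "0 \<le> rb" "b = ennreal rb" by (cases b) auto
  from \<open>c \<noteq> \<infinity>\<close> obtain rc where rc: "0 \<le> rc" "c = ennreal rc" by (cases c) auto
  from \<open>d < \<infinity>\<close> obtain rd where rd: "0 \<le> rd" "d = ennreal rd" by (cases d) auto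
  have "ennreal (ra + rd) \<le> ennreal (rc + rb)"
    using assms(1) ra rb rc rd by (simp add: ennreal_plus)
  hence "ra + rd \<le> rc + rb" using rc rb by (simp add: ennreal_le_iff flip: ennreal_plus)
  then show ?thesis using ra rb rc rd by (simp add: enn2ereal_ennreal)
qed

lemma harm_meas:
  fixes p q :: "'a::euclidean_space \<Rightarrow> real"
  assumes pm[measurable]: "p \<in> borel_measurable lborel"  and qm[measurable]: "q \<in> borel_measurable lborel"
  shows "harm w p q \<in> borel_measurable lborel"
proof -
  have a: "(\<lambda>x. p x * q x / ((1 - w) * p x + w * q x)) \<in> borel_measurable lborel" by measurable
  have b: "{x \<in> space lborel. p x * q x = 0} \<in> sets lborel" by measurable
  show ?thesis unfolding harm_def[abs_def]
    by (rule measurable_If[OF _ a b]) simp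
qed
lemma kl_meas:
  fixes p q :: "'a::euclidean_space \<Rightarrow> real"
  assumes pm[measurable]: "p \<in> borel_measurable lborel"  and qm[measurable]: "q \<in> borel_measurable lborel"
  shows "kl_integrand p q \<in> borel_measurable lborel"
proof -
  have a: "(\<lambda>x. ereal (p x * ln (p x / q x))) \<in> borel_measurable lborel" by measurable
  have b: "{x \<in> space lborel. p x = 0} \<in> sets lborel" by measurable
  have c: "{x \<in> space lborel. q x = 0} \<in> sets lborel" by measurable
  have d: "(\<lambda>x. if q x = 0 then \<infinity> else ereal (p x * ln (p x / q x))) \<in> borel_measurable lborel"
    by (rule measurable_If[OF _ a c]) simp
  show ?thesis unfolding kl_integrand_def[abs_def]
    by (rule measurable_If[OF _ d b]) simp
qed

lemma main:
  fixes p q :: "'a::euclidean_space \<Rightarrow> real" and w :: real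
  assumes dp: "is_density p" and dq: "is_density q"
    and w0: "0 \<le> w" and w1: "w \<le> 1"
    and zpos: "harm_norm_const w p q > 0"
  shows "KL_div p (harm_mean_density w p q) \<le> KL_div p q"
proof -
  define h where "h = harm w p q"
  define z where "z = harm_norm_const w p q"
  define M where "M = harm_mean_density w p q"
  have z0: "z > 0" using zpos z_def by simp
  have pm[measurable]: "p \<in> borel_measurable lborel" and p0: "\<And>x. 0 \<le> p x"
    and p1: "(\<integral>\<^sup>+ x. ennreal (p x) \<partial>lborel) = 1"
    using dp unfolding is_density_def by auto
  have qm[measurable]: "q \<in> borel_measurable lborel" and q0: "\<And>x. 0 \<le> q x"
    and q1: "(\<integral>\<^sup>+ x. ennreal (q x) \<partial>lborel) = 1"
    using dq unfolding is_density_def by auto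
  have hm[measurable]: "h \<in> borel_measurable lborel"
    unfolding h_def by (rule harm_meas[OF pm qm])
  have den: "0 < (1 - w) * p x + w * q x" if "p x > 0" "q x > 0" for x
    using that w0 w1 by (smt (verit) mult_nonneg_nonneg mult_pos_pos)
  have h0: "0 \<le> h x" for x
    using den[of x] p0[of x] q0[of x] unfolding h_def harm_def
    by (auto simp: less_le)
  have hle: "h x \<le> w * p x + (1 - w) * q x" for x
  proof (cases "p x * q x = 0")
    case True
    then show ?thesis unfolding h_def harm_def using p0[of x] q0[of x] w0 w1 by simp
  next
    case False
    then have a: "p x > 0" "q x > 0" using p0[of x] q0[of x] by (auto simp: less_le)
    define d where "d = (1 - w) * p x + w * q x"
    have d: "d > 0" using den[OF a] d_def by simp
    have "p x * q x \<le> d * (w * p x + (1 - w) * q x)"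
    proof -
      have "d * (w * p x + (1 - w) * q x) - p x * q x = w * (1 - w) * (p x - q x)^2"
        unfolding d_def by (simp add: algebra_simps power2_eq_square)
      moreover have "w * (1 - w) * (p x - q x)^2 \<ge> 0" using w0 w1 by simp
      ultimately show ?thesis by linarith
    qed
    then show ?thesis using False d unfolding h_def harm_def d_def[symmetric]
      by (simp add: divide_le_eq mult.commute)
  qed
  have hint: "integrable lborel h"
    using zpos not_integrable_integral_eq unfolding harm_norm_const_def h_def by fastforce
  have hz: "(\<integral>\<^sup>+ x. ennreal (h x) \<partial>lborel) = ennreal z"
    unfolding z_def harm_norm_const_def h_def[symmetric]
    by (rule nn_integral_eq_integral[OF hint]) (simp add: h0)
  have "ennreal z \<le> (\<integral>\<^sup>+ x. ennreal (w * p x + (1 - w) * q x) \<partial>lborel)"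
    unfolding hz[symmetric] by (intro nn_integral_mono) (simp add: hle ennreal_leI)
  also have "\<dots> = (\<integral>\<^sup>+ x. ennreal w * ennreal (p x) + ennreal (1 - w) * ennreal (q x) \<partial>lborel)"
    using w0 w1 p0 q0 by (intro nn_integral_cong) (simp add: ennreal_plus ennreal_mult)
  also have "\<dots> = ennreal w * 1 + ennreal (1 - w) * 1"
    by (simp add: nn_integral_add nn_integral_cmult p1 q1)
  also have "\<dots> = 1" using w0 w1 by (simp flip: ennreal_plus)
  finally have z1: "z \<le> 1" by (simp add: ennreal_le_1)
  have Mx: "M x = h x / z" for x unfolding M_def harm_mean_density_def h_def z_def ..
  have Mm[measurable]: "M \<in> borel_measurable lborel" unfolding Mx[abs_def] by measurable
  define F where "F = kl_integrand p M"
  define G where "G = kl_integrand p q"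
  have Fm[measurable]: "F \<in> borel_measurable lborel"
    unfolding F_def by (rule kl_meas[OF pm Mm])
  have Gm[measurable]: "G \<in> borel_measurable lborel"
    unfolding G_def by (rule kl_meas[OF pm qm])
  have key: "e2ennreal (F x) + e2ennreal (- G x) + ennreal (p x * (1 - z + w))
      \<le> e2ennreal (G x) + e2ennreal (- F x) + ennreal (w * q x)" for x
  proof (cases "p x = 0")
    case True
    then show ?thesis unfolding F_def G_def kl_integrand_def by simp
  next
    case pn: False
    then have a: "p x > 0" using p0[of x] by (simp add: less_le)
    show ?thesis
    proof (cases "q x = 0")
      case True
      then show ?thesis using pn unfolding G_def kl_integrand_def by simp
    next
      case qn: False
      then have b: "q x > 0" using q0[of x] by (simp add: less_le)
      have hx: "h x = p x * q x / ((1 - w) * p x + w * q x)"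
        using a b unfolding h_def harm_def by simp
      have hpos: "h x > 0" unfolding hx using a b den[OF a b] by simp
      have Mpos: "M x > 0" unfolding Mx using hpos z0 by simp
      have Fx: "F x = ereal (p x * ln (p x / M x))"
        using pn Mpos unfolding F_def kl_integrand_def by simp
      have Gx: "G x = ereal (p x * ln (p x / q x))"
        using pn qn unfolding G_def kl_integrand_def by simp
      have r: "p x * ln (p x / M x) + p x * (1 - z + w) \<le> p x * ln (p x / q x) + w * q x"
        using key_real[OF a b w0 w1 z0] unfolding Mx hx by simp
      have "ennreal (p x * ln (p x / M x)) + ennreal (- (p x * ln (p x / q x))) + ennreal (p x * (1 - z + w))
          \<le> ennreal (p x * ln (p x / q x)) + ennreal (- (p x * ln (p x / M x))) + ennreal (w * q x)"
        by (rule ennreal_parts) (use r a b w0 z1 in auto)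
      then show ?thesis unfolding Fx Gx by simp
    qed
  qed
  have BF: "e2ennreal (- F x) \<le> ennreal (M x)" for x
  proof (cases "p x = 0 \<or> M x = 0")
    case True
    then show ?thesis unfolding F_def kl_integrand_def by (auto simp: e2ennreal_neg)
  next
    case False
    then have a: "p x > 0" using p0[of x] by (simp add: less_le)
    have m0: "M x \<ge> 0" unfolding Mx using h0[of x] z0 by simp
    with False have m: "M x > 0" by simp
    have Fx: "F x = ereal (p x * ln (p x / M x))"
      using False unfolding F_def kl_integrand_def by simp
    have "ln (p x / M x) = - ln (M x / p x)" using a m by (simp add: ln_div)
    moreover have "ln (M x / p x) \<le> M x / p x - 1" using a m by (intro ln_le_minus_one) simp
    ultimately have "- (p x * ln (p x / M x)) \<le> p x * (M x / p x - 1)"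
      using a by (simp add: mult_left_mono)
    also have "\<dots> \<le> M x" using a by (simp add: field_simps)
    finally show ?thesis unfolding Fx by (simp add: ennreal_leI)
  qed
  have "(\<integral>\<^sup>+ x. ennreal (M x) \<partial>lborel) = (\<integral>\<^sup>+ x. ennreal (1 / z) * ennreal (h x) \<partial>lborel)"
    using z0 h0 by (intro nn_integral_cong) (simp add: Mx flip: ennreal_mult)
  also have "\<dots> = ennreal (1 / z) * ennreal z" by (simp add: nn_integral_cmult hz)
  also have "\<dots> = 1" using z0 by (simp flip: ennreal_mult)
  finally have M1: "(\<integral>\<^sup>+ x. ennreal (M x) \<partial>lborel) = 1" .
  have BFfin: "(\<integral>\<^sup>+ x. e2ennreal (- F x) \<partial>lborel) < \<infinity>"
  proof -
    have "(\<integral>\<^sup>+ x. e2ennreal (- F x) \<partial>lborel) \<le> 1"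
      unfolding M1[symmetric] by (intro nn_integral_mono BF)
    then show ?thesis using ennreal_one_less_top unfolding infinity_ennreal_def by (rule order.strict_trans1)
  qed
  have "(\<integral>\<^sup>+ x. e2ennreal (F x) \<partial>lborel) + (\<integral>\<^sup>+ x. e2ennreal (- G x) \<partial>lborel)
      + ennreal (1 - z + w)
      = (\<integral>\<^sup>+ x. e2ennreal (F x) + e2ennreal (- G x) + ennreal (p x * (1 - z + w)) \<partial>lborel)"
  proof -
    have "(\<integral>\<^sup>+ x. ennreal (p x * (1 - z + w)) \<partial>lborel) = (\<integral>\<^sup>+ x. ennreal (1 - z + w) * ennreal (p x) \<partial>lborel)"
      using z1 w0 p0 by (intro nn_integral_cong) (simp add: ennreal_mult mult.commute)
    also have "\<dots> = ennreal (1 - z + w)" by (simp add: nn_integral_cmult p1)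
    finally have c: "(\<integral>\<^sup>+ x. ennreal (p x * (1 - z + w)) \<partial>lborel) = ennreal (1 - z + w)" .
    have "(\<integral>\<^sup>+ x. e2ennreal (F x) + e2ennreal (- G x) + ennreal (p x * (1 - z + w)) \<partial>lborel)
       = (\<integral>\<^sup>+ x. e2ennreal (F x) + e2ennreal (- G x) \<partial>lborel) + (\<integral>\<^sup>+ x. ennreal (p x * (1 - z + w)) \<partial>lborel)"
      by (rule nn_integral_add) measurable
    also have "(\<integral>\<^sup>+ x. e2ennreal (F x) + e2ennreal (- G x) \<partial>lborel)
       = (\<integral>\<^sup>+ x. e2ennreal (F x) \<partial>lborel) + (\<integral>\<^sup>+ x. e2ennreal (- G x) \<partial>lborel)"
      by (rule nn_integral_add) measurable
    finally show ?thesis unfolding c by simp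
  qed
  also have "\<dots> \<le> (\<integral>\<^sup>+ x. e2ennreal (G x) + e2ennreal (- F x) + ennreal (w * q x) \<partial>lborel)"
    by (intro nn_integral_mono key)
  also have "\<dots> = (\<integral>\<^sup>+ x. e2ennreal (G x) \<partial>lborel) + (\<integral>\<^sup>+ x. e2ennreal (- F x) \<partial>lborel)
      + ennreal w"
  proof -
    have "(\<integral>\<^sup>+ x. ennreal (w * q x) \<partial>lborel) = (\<integral>\<^sup>+ x. ennreal w * ennreal (q x) \<partial>lborel)"
      using w0 q0 by (intro nn_integral_cong) (simp add: ennreal_mult)
    also have "\<dots> = ennreal w" by (simp add: nn_integral_cmult q1)
    finally have c: "(\<integral>\<^sup>+ x. ennreal (w * q x) \<partial>lborel) = ennreal w" .
    have "(\<integral>\<^sup>+ x. e2ennreal (G x) + e2ennreal (- F x) + ennreal (w * q x) \<partial>lborel)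
       = (\<integral>\<^sup>+ x. e2ennreal (G x) + e2ennreal (- F x) \<partial>lborel) + (\<integral>\<^sup>+ x. ennreal (w * q x) \<partial>lborel)"
      by (rule nn_integral_add) measurable
    also have "(\<integral>\<^sup>+ x. e2ennreal (G x) + e2ennreal (- F x) \<partial>lborel)
       = (\<integral>\<^sup>+ x. e2ennreal (G x) \<partial>lborel) + (\<integral>\<^sup>+ x. e2ennreal (- F x) \<partial>lborel)"
      by (rule nn_integral_add) measurable
    finally show ?thesis unfolding c by simp
  qed
  also have "\<dots> \<le> (\<integral>\<^sup>+ x. e2ennreal (G x) \<partial>lborel) + (\<integral>\<^sup>+ x. e2ennreal (- F x) \<partial>lborel)
      + ennreal (1 - z + w)"
    using z1 by (intro add_left_mono ennreal_leI) simp
  finally have ineq0: "ennreal (1 - z + w) + ((\<integral>\<^sup>+ x. e2ennreal (F x) \<partial>lborel) + (\<integral>\<^sup>+ x. e2ennreal (- G x) \<partial>lborel))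
      \<le> ennreal (1 - z + w) + ((\<integral>\<^sup>+ x. e2ennreal (G x) \<partial>lborel) + (\<integral>\<^sup>+ x. e2ennreal (- F x) \<partial>lborel))"
    by (simp only: add.commute)
  have ineq: "(\<integral>\<^sup>+ x. e2ennreal (F x) \<partial>lborel) + (\<integral>\<^sup>+ x. e2ennreal (- G x) \<partial>lborel)
      \<le> (\<integral>\<^sup>+ x. e2ennreal (G x) \<partial>lborel) + (\<integral>\<^sup>+ x. e2ennreal (- F x) \<partial>lborel)"
    using ineq0 unfolding ennreal_add_left_cancel_le by simp
  show ?thesis
    unfolding KL_div_def M_def[symmetric] F_def[symmetric] G_def[symmetric]
    by (rule ennreal_final[OF ineq BFfin])
qed

lemma harm_mean_swap:
  "harm_mean_density w p1 p2 = harm_mean_density (1 - w) p2 p1"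
proof -
  have "harm w p1 p2 = harm (1 - w) p2 p1"
    by (rule ext) (simp add: harm_def algebra_simps)
  then show ?thesis
    unfolding harm_mean_density_def[abs_def] harm_norm_const_def by simp
qed

theorem proposition1:
  fixes p1 p2 :: "real ^ 'n \<Rightarrow> real" and w :: real
  assumes "is_density p1" and "is_density p2"
    and "0 \<le> w" and "w \<le> 1"
    and "harm_norm_const w p1 p2 > 0"
  shows "KL_div p1 (harm_mean_density w p1 p2) \<le> KL_div p1 p2
       \<and> KL_div p2 (harm_mean_density w p1 p2) \<le> KL_div p2 p1"
proof
  show "KL_div p1 (harm_mean_density w p1 p2) \<le> KL_div p1 p2"
    by (rule main) (use assms in auto)
  have "harm w p1 p2 = harm (1 - w) p2 p1"
    by (rule ext) (simp add: harm_def algebra_simps)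
  then have "harm_norm_const (1 - w) p2 p1 > 0"
    using assms(5) unfolding harm_norm_const_def by simp
  then show "KL_div p2 (harm_mean_density w p1 p2) \<le> KL_div p2 p1"
    unfolding harm_mean_swap[of w p1 p2] using main[OF assms(2,1), of "1 - w"] assms by simp
qed

end
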